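(* Let $p$ be a prime, $R$ an $F$-pure ring of characteristic $p$, and $f\in R$ a non-zero non-unit. Then for every integer $d\ge1$, \[ p^d\,\langle \operatorname{fpt}(f)\rangle_d = \max\{a\in\mathbb{N} : R\cdot f^{a/p^d}\subseteq R^{1/p^d}\text{ splits over }R\}. \]
   Context: A ring $R$ of characteristic $p$ is $F$-pure if $R\subseteq R^{1/p}$ splits as a map of $R$-modules; such a ring is reduced. Roots. $R^{1/p^e}$ is the ring of formal symbols $r^{1/p^e}$ ($r\in R$), with $r^{1/p^e}+s^{1/p^e}=(r+s)^{1/p^e}$ and $r^{1/p^e}s^{1/p^e}=(rs)^{1/p^e}$. It contains $R$ via $r\mapsto(r^{p^e})^{1/p^e}$. Powers of $f$. $f^{a/p^e}:=(f^a)^{1/p^e}$. Splitting. For $t \in R^{1/p^e}$, the inclusion $R\cdot t\subseteq R^{1/p^e}$ splits over $R$ if some $R$-linear $\theta:R^{1/p^e}\to R$ has $\theta(t)=1$. $F$-pure threshold. $(R,f^\lambda)$ is $F$-pure if $R\cdot f^{\lfloor (p^e-1)\lambda\rfloor/p^e}\subseteq R^{1/p^e}$ splits for all $e\ge1$. $\operatorname{fpt}(f)$ is the supremum of $\lambda\ge 0$ with $(R,f^\lambda)$ $F$-pure; it lies in $[0,1]$. Base $p$ expansions. For $\alpha\in(0,1]$, its non-terminating base $p$ expansion is the unique expression $\alpha=\sum_{e\ge1}a_e/p^e$ with integers $0\le a_e\le p-1$ not all eventually zero. The $e$-th truncation is $\langle\alpha\rangle_e:=\sum_{i=1}^e a_i/p^i$.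 By convention $\langle 0\rangle_e=0$. *)

theory Defs
  imports Complex_Main "HOL-Computational_Algebra.Primes"
begin

text \<open>The R-module R^{1/p^e} is modelled by a copy of R: the formal symbol r^{1/p^e}
  is represented by r itself. Addition/multiplication of symbols is that of R, and
  the R-module structure is  s . r^{1/p^e} = (s^{p^e} r)^{1/p^e}.
  Hence an R-linear map R^{1/p^e} -> R is an additive map theta : R -> R with
  theta (s^(p^e) * r) = s * theta r.\<close>

definition root_linear :: "nat \<Rightarrow> nat \<Rightarrow> ('a::comm_ring_1 \<Rightarrow> 'a) \<Rightarrow> bool" where
  "root_linear p e \<theta> \<longleftrightarrow>
     (\<forall>x y. \<theta> (x + y) = \<theta> x + \<theta> y) \<and> (\<forall>s r. \<theta> (s ^ (p ^ e) * r) = s * \<theta> r)"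

text \<open>For t = u^{1/p^e} (represented by u), R.t \<subseteq> R^{1/p^e} splits.\<close>
definition root_splits :: "nat \<Rightarrow> nat \<Rightarrow> 'a::comm_ring_1 \<Rightarrow> bool" where
  "root_splits p e u \<longleftrightarrow> (\<exists>\<theta>. root_linear p e \<theta> \<and> \<theta> u = 1)"

text \<open>F-pure: the inclusion R -> R^{1/p}, r |-> (r^p)^{1/p}, splits.\<close>
definition F_pure_ring :: "nat \<Rightarrow> 'a::comm_ring_1 itself \<Rightarrow> bool" where
  "F_pure_ring p _ \<longleftrightarrow> (\<exists>\<theta>::'a \<Rightarrow> 'a. root_linear p 1 \<theta> \<and> (\<forall>r. \<theta> (r ^ p) = r))"

definition F_pure_pair :: "nat \<Rightarrow> 'a::comm_ring_1 \<Rightarrow> real \<Rightarrow> bool" where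
  "F_pure_pair p f lam \<longleftrightarrow>
     (\<forall>e\<ge>1. root_splits p e (f ^ nat \<lfloor>(real (p ^ e) - 1) * lam\<rfloor>))"

definition fpt :: "nat \<Rightarrow> 'a::comm_ring_1 \<Rightarrow> real" where
  "fpt p f = Sup {lam. lam \<ge> 0 \<and> F_pure_pair p f lam}"

text \<open>Non-terminating base p expansion: alpha = sum_{e>=1} a_e / p^e, 0 <= a_e <= p-1,
  not eventually zero (index 0 unused, set to 0).\<close>
definition nonterm_expansion :: "nat \<Rightarrow> real \<Rightarrow> (nat \<Rightarrow> nat) \<Rightarrow> bool" where
  "nonterm_expansion p \<alpha> a \<longleftrightarrow>
     a 0 = 0 \<and> (\<forall>i. a i \<le> p - 1) \<and> (\<forall>N. \<exists>i>N. a i \<noteq> 0) \<and>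
     (\<lambda>i. real (a i) / real p ^ i) sums \<alpha>"

definition trunc :: "nat \<Rightarrow> real \<Rightarrow> nat \<Rightarrow> real" where
  "trunc p \<alpha> e = (if \<alpha> = 0 then 0 else
     (let a = (THE a. nonterm_expansion p \<alpha> a) in \<Sum>i=1..e. real (a i) / real p ^ i))"

end

theory Submission
  imports Defs
begin

lemma rl_comp:
  fixes \<theta> \<psi> :: "'a::comm_ring_1 \<Rightarrow> 'a"
  assumes "root_linear p e \<theta>" "root_linear p k \<psi>"
  shows "root_linear p (e + k) (\<theta> \<circ> \<psi>)"
proof -
  have "\<forall>s r. \<theta> (\<psi> (s ^ (p ^ (e + k)) * r)) = s * \<theta> (\<psi> r)"
  proof (intro allI)
    fix s r :: 'a
    have "s ^ (p ^ (e + k)) = (s ^ (p ^ e)) ^ (p ^ k)" by (simp add: power_add power_mult)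
    then have "\<psi> (s ^ (p ^ (e + k)) * r) = s ^ (p ^ e) * \<psi> r"
      using assms(2) by (simp add: root_linear_def)
    then show "\<theta> (\<psi> (s ^ (p ^ (e + k)) * r)) = s * \<theta> (\<psi> r)"
      using assms(1) by (simp add: root_linear_def)
  qed
  then show ?thesis using assms by (simp add: root_linear_def)
qed

lemma splits_comp:
  fixes u v :: "'a::comm_ring_1"
  assumes "root_splits p e u" "root_splits p k v"
  shows "root_splits p (e + k) (u ^ (p ^ k) * v)"
proof -
  obtain \<theta> where t: "root_linear p e \<theta>" "\<theta> u = 1" using assms(1) root_splits_def by blast
  obtain \<psi> where s: "root_linear p k \<psi>" "\<psi> v = 1" using assms(2) root_splits_def by blast
  have "(\<theta> \<circ> \<psi>) (u ^ (p ^ k) * v) = 1"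
    using t s by (simp add: root_linear_def)
  then show ?thesis using rl_comp[OF t(1) s(1)] root_splits_def by blast
qed

lemma splits_one:
  assumes "F_pure_ring p TYPE('a::comm_ring_1)"
  shows "root_splits p e (1::'a)"
proof (induction e)
  case 0
  have "root_linear p 0 (id::'a\<Rightarrow>'a)" by (simp add: root_linear_def)
  then show ?case unfolding root_splits_def by (intro exI[of _ id]) simp
next
  case (Suc e)
  obtain \<theta> :: "'a \<Rightarrow> 'a" where t: "root_linear p 1 \<theta>" "\<forall>r. \<theta> (r ^ p) = r"
    using assms F_pure_ring_def by blast
  have "\<theta> 1 = 1" using t(2) by (metis power_one)
  then have "root_splits p 1 (1::'a)" using t(1) root_splits_def by blast
  from splits_comp[OF Suc this] show ?case by simp
qed

lemma splits_dvd:
  fixes u v :: "'a::comm_ring_1"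
  assumes "root_splits p e (u * v)"
  shows "root_splits p e u"
proof -
  obtain \<theta> where t: "root_linear p e \<theta>" "\<theta> (u * v) = 1" using assms root_splits_def by blast
  have "root_linear p e (\<lambda>x. \<theta> (x * v))"
    using t(1) unfolding root_linear_def by (simp add: distrib_right mult.assoc)
  then show ?thesis using t(2) root_splits_def by blast
qed

lemma splits_mono:
  fixes f :: "'a::comm_ring_1"
  assumes "root_splits p e (f ^ a)" "b \<le> a"
  shows "root_splits p e (f ^ b)"
proof -
  have "f ^ a = f ^ b * f ^ (a - b)" using assms(2) by (simp flip: power_add)
  then show ?thesis using assms(1) splits_dvd by metis
qed

lemma splits_down:
  fixes f :: "'a::comm_ring_1"
  assumes "prime p" "CHAR('a) = p" "root_splits p (e + j) (f ^ b)"
  shows "root_splits p e (f ^ (b div p ^ j))"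
proof -
  obtain \<psi> where s: "root_linear p (e + j) \<psi>" "\<psi> (f ^ b) = 1" using assms(3) root_splits_def by blast
  define c where "c = b mod p ^ j"
  define \<theta> where "\<theta> x = \<psi> (x ^ (p ^ j) * f ^ c)" for x
  have add: "(x + y) ^ (p ^ j) = x ^ (p ^ j) + y ^ (p ^ j)" for x y :: 'a
    using freshmans_dream'[where m="p ^ j" and n=j and x=x and y=y] assms by simp
  have "root_linear p e \<theta>"
    unfolding root_linear_def
  proof (intro conjI allI)
    fix x y show "\<theta> (x + y) = \<theta> x + \<theta> y"
      using s(1) unfolding \<theta>_def root_linear_def by (simp add: add distrib_right)
  next
    fix s r :: 'a
    have "(s ^ p ^ e * r) ^ p ^ j * f ^ c = s ^ p ^ (e + j) * (r ^ p ^ j * f ^ c)"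
      by (simp add: power_mult_distrib power_add power_mult mult.assoc)
    then show "\<theta> (s ^ p ^ e * r) = s * \<theta> r"
      using s(1) unfolding \<theta>_def root_linear_def by simp
  qed
  moreover have "\<theta> (f ^ (b div p ^ j)) = 1"
  proof -
    have "(f ^ (b div p ^ j)) ^ p ^ j * f ^ c = f ^ b"
      unfolding c_def by (simp flip: power_mult power_add del: div_mult_mod_eq add: div_mult_mod_eq)
    then show ?thesis using s(2) \<theta>_def by simp
  qed
  ultimately show ?thesis using root_splits_def by blast
qed

lemma splits_bound:
  fixes f :: "'a::comm_ring_1"
  assumes "root_splits p e (f ^ a)" "\<not> f dvd 1"
  shows "a < p ^ e"
proof (rule ccontr)
  assume "\<not> a < p ^ e"
  obtain \<theta> where t: "root_linear p e \<theta>" "\<theta> (f ^ a) = 1" using assms(1) root_splits_def by blast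
  have "f ^ a = f ^ (p ^ e) * f ^ (a - p ^ e)" using \<open>\<not> a < p ^ e\<close> by (simp flip: power_add)
  then have "1 = f * \<theta> (f ^ (a - p ^ e))" using t unfolding root_linear_def by metis
  then show False using assms(2) by (metis dvdI)
qed


lemma arch_small:
  fixes q d :: real assumes "q > 1" "d > 0" shows "\<exists>m. 1 / q ^ m < d"
proof -
  obtain m where "1/d < q ^ m" using real_arch_pow[OF assms(1)] by blast
  moreover have "q ^ m > 0" using assms by simp
  ultimately have "1 / q ^ m < d" using assms by (simp add: field_simps)
  then show ?thesis by blast
qed

lemma exp_bounds:
  assumes p: "p \<ge> 2" and ne: "nonterm_expansion p \<alpha> b"
  shows "(\<Sum>i=1..e. real (b i) / real p ^ i) < \<alpha> \<and>
         \<alpha> \<le> (\<Sum>i=1..e. real (b i) / real p ^ i) + 1 / real p ^ e"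
proof -
  let ?q = "real p"
  define g where "g i = real (b i) / ?q ^ i" for i
  have b0: "b 0 = 0" and bd: "\<And>i. b i \<le> p - 1" and nz: "\<And>N. \<exists>i>N. b i \<noteq> 0" and sm: "g sums \<alpha>"
    using ne unfolding nonterm_expansion_def g_def by auto
  have T: "(\<Sum>i=1..e. g i) = (\<Sum>i<Suc e. g i)"
  proof -
    have "{..<Suc e} = insert 0 {1..e}" by auto
    then show ?thesis by (simp add: g_def b0)
  qed
  define t where "t n = g (n + Suc e)" for n
  have ts: "t sums (\<alpha> - (\<Sum>i=1..e. g i))"
    unfolding t_def T by (rule sums_split_initial_segment[OF sm])
  have tnn: "\<And>n. 0 \<le> t n" unfolding t_def g_def by simp
  obtain i where i: "i > e" "b i \<noteq> 0" using nz by blast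
  have "0 < t (i - Suc e)" using i p unfolding t_def g_def by auto
  then have pos: "0 < \<alpha> - (\<Sum>i=1..e. g i)"
    using suminf_pos2[OF sums_summable[OF ts] tnn] sums_unique[OF ts] by auto
  define c where "c = (?q - 1) / ?q ^ Suc e"
  have geo: "(\<lambda>n. c * (1/?q) ^ n) sums (c * (1 / (1 - 1/?q)))"
    using geometric_sums[of "1/?q"] p by (intro sums_mult) auto
  have cval: "c * (1 / (1 - 1/?q)) = 1 / ?q ^ e"
    using p unfolding c_def by (simp add: field_simps)
  have le: "t n \<le> c * (1/?q) ^ n" for n
  proof -
    have "real (b (n + Suc e)) \<le> ?q - 1" using bd[of "n + Suc e"] p by (simp add: of_nat_diff)
    moreover have "c * (1/?q) ^ n = (?q - 1) / ?q ^ (n + Suc e)"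
      unfolding c_def by (simp add: power_add power_divide)
    ultimately show ?thesis unfolding t_def g_def using p by (simp add: divide_right_mono)
  qed
  have "\<alpha> - (\<Sum>i=1..e. g i) \<le> 1 / ?q ^ e" using sums_le[OF le ts geo] cval by simp
  with pos show ?thesis unfolding g_def by simp
qed

lemma exp_unique_aux:
  assumes p: "p \<ge> 2" and nb: "nonterm_expansion p \<alpha> b" and nc: "nonterm_expansion p \<alpha> c"
    and i: "b i < c i" and j: "\<forall>j<i. b j = c j"
  shows False
proof -
  let ?q = "real p"
  have "b 0 = 0" "c 0 = 0" using nb nc unfolding nonterm_expansion_def by auto
  then have "i \<noteq> 0" using i by (intro notI) simp
  then obtain m where m: "i = Suc m" by (cases i) auto
  have same: "(\<Sum>k=1..m. real (b k) / ?q ^ k) = (\<Sum>k=1..m. real (c k) / ?q ^ k)"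
    using j m by (intro sum.cong) auto
  have "real (b i) + 1 \<le> real (c i)" using i by simp
  then have "real (b i) / ?q ^ i + 1 / ?q ^ i \<le> real (c i) / ?q ^ i"
    using p by (simp add: add_divide_distrib[symmetric] divide_right_mono)
  then have "(\<Sum>k=1..i. real (b k) / ?q ^ k) + 1 / ?q ^ i \<le> (\<Sum>k=1..i. real (c k) / ?q ^ k)"
    using same m by simp
  moreover have "\<alpha> \<le> (\<Sum>k=1..i. real (b k) / ?q ^ k) + 1 / ?q ^ i" using exp_bounds[OF p nb] by blast
  moreover have "(\<Sum>k=1..i. real (c k) / ?q ^ k) < \<alpha>" using exp_bounds[OF p nc] by blast
  ultimately show False by simp
qed

lemma exp_unique:
  assumes p: "p \<ge> 2" and nb: "nonterm_expansion p \<alpha> b" and nc: "nonterm_expansion p \<alpha> c"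
  shows "b = c"
proof (rule ccontr)
  assume "b \<noteq> c"
  then have "\<exists>i. b i \<noteq> c i" by auto
  then obtain i where i: "b i \<noteq> c i" and j: "\<forall>j<i. b j = c j"
    using exists_least_iff[of "\<lambda>i. b i \<noteq> c i"] by blast
  show False
  proof (cases "b i < c i")
    case True then show ?thesis using exp_unique_aux[OF p nb nc True j] by blast
  next
    case False then have "c i < b i" using i by simp
    moreover have "\<forall>j<i. c j = b j" using j by simp
    ultimately show ?thesis using exp_unique_aux[OF p nc nb] by blast
  qed
qed

lemma trunc_from_nu:
  fixes \<nu> :: "nat \<Rightarrow> nat" and \<alpha> :: real
  assumes p: "p \<ge> 2" and n0: "\<nu> 0 = 0"
    and up: "\<And>e. \<nu> e * p \<le> \<nu> (Suc e)" and dn: "\<And>e. \<nu> (Suc e) < (\<nu> e + 1) * p"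
    and lo: "\<And>e. real (\<nu> e) / real p ^ e < \<alpha>"
    and hi: "\<And>e. \<alpha> \<le> (real (\<nu> e) + 1) / real p ^ e"
  shows "real p ^ d * trunc p \<alpha> d = real (\<nu> d)"
proof -
  let ?q = "real p"
  define a where "a i = (if i = 0 then 0 else \<nu> i - \<nu> (i - 1) * p)" for i
  have ps: "(\<Sum>i<Suc n. real (a i) / ?q ^ i) = real (\<nu> n) / ?q ^ n" for n
  proof (induction n)
    case 0 then show ?case by (simp add: a_def n0)
  next
    case (Suc n)
    have "real (a (Suc n)) = real (\<nu> (Suc n)) - real (\<nu> n) * ?q"
      using up[of n] by (simp add: a_def of_nat_diff)
    then show ?case using Suc p by (simp add: field_simps)
  qed
  have ps1: "(\<Sum>i=1..n. real (a i) / ?q ^ i) = real (\<nu> n) / ?q ^ n" for n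
  proof -
    have "{..<Suc n} = insert 0 {1..n}" by auto
    then show ?thesis using ps[of n] by (simp add: a_def)
  qed
  have lim: "(\<lambda>n. real (\<nu> n) / ?q ^ n) \<longlonglongrightarrow> \<alpha>"
  proof (rule tendsto_sandwich[of "\<lambda>n. \<alpha> - (1/?q)^n" _ _ "\<lambda>n. \<alpha>"])
    have "\<alpha> - (1 / ?q) ^ n \<le> real (\<nu> n) / ?q ^ n" for n
      using hi[of n] by (simp add: power_divide add_divide_distrib)
    then show "\<forall>\<^sub>F n in sequentially. \<alpha> - (1 / ?q) ^ n \<le> real (\<nu> n) / ?q ^ n"
      by (intro always_eventually) auto
    show "\<forall>\<^sub>F n in sequentially. real (\<nu> n) / ?q ^ n \<le> \<alpha>"
      using lo by (intro always_eventually) (auto intro: less_imp_le)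
    have "(\<lambda>n. (1/?q)^n) \<longlonglongrightarrow> 0" using p by (intro LIMSEQ_realpow_zero) auto
    then show "(\<lambda>n. \<alpha> - (1/?q)^n) \<longlonglongrightarrow> \<alpha>"
      using tendsto_diff[OF tendsto_const[of \<alpha>]] by fastforce
  qed simp
  have sm: "(\<lambda>i. real (a i) / ?q ^ i) sums \<alpha>"
  proof -
    have "(\<lambda>n. \<Sum>i<Suc n. real (a i) / ?q ^ i) \<longlonglongrightarrow> \<alpha>" unfolding ps by (rule lim)
    then show ?thesis unfolding sums_def by (rule LIMSEQ_imp_Suc)
  qed
  have dig: "a i \<le> p - 1" for i
  proof (cases i)
    case (Suc j)
    have "\<nu> (Suc j) < \<nu> j * p + p" using dn[of j] by (simp add: distrib_right)
    then show ?thesis unfolding Suc a_def by simp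
  qed (simp add: a_def)
  have nz: "\<exists>i>N. a i \<noteq> 0" for N
  proof (rule ccontr)
    assume "\<not> (\<exists>i>N. a i \<noteq> 0)"
    then have z: "\<And>i. i > N \<Longrightarrow> a i = 0" by auto
    have geo: "\<nu> (N + m) = \<nu> N * p ^ m" for m
    proof (induction m)
      case (Suc m)
      have "a (Suc (N + m)) = 0" using z by simp
      then have "\<nu> (Suc (N + m)) = \<nu> (N + m) * p" using up[of "N + m"] by (simp add: a_def)
      then show ?case using Suc by simp
    qed simp
    have eq: "real (\<nu> (N + m)) / ?q ^ (N + m) = real (\<nu> N) / ?q ^ N" for m
      using p geo[of m] by (simp add: power_add)
    have "?q > 1" using p by simp
    moreover have "\<alpha> - real (\<nu> N) / ?q ^ N > 0" using lo[of N] by simp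
    ultimately obtain m where m: "1 / ?q ^ m < \<alpha> - real (\<nu> N) / ?q ^ N"
      using arch_small by blast
    have "1 / ?q ^ (N + m) \<le> 1 / ?q ^ m"
      using p by (intro divide_left_mono power_increasing) auto
    moreover have "\<alpha> \<le> real (\<nu> N) / ?q ^ N + 1 / ?q ^ (N + m)"
      using hi[of "N + m"] eq[of m] by (simp add: add_divide_distrib)
    ultimately show False using m by simp
  qed
  have ne: "nonterm_expansion p \<alpha> a"
    unfolding nonterm_expansion_def using sm dig nz by (simp add: a_def)
  have the: "(THE b. nonterm_expansion p \<alpha> b) = a"
    by (rule the_equality[where P="nonterm_expansion p \<alpha>", OF ne]) (rule exp_unique[OF p _ ne])
  have "\<alpha> \<noteq> 0" using lo[of 0] by auto
  then have "trunc p \<alpha> d = real (\<nu> d) / ?q ^ d"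
    unfolding trunc_def the Let_def using ps1 by simp
  then show ?thesis using p by simp
qed


definition nu :: "nat \<Rightarrow> 'a::comm_ring_1 \<Rightarrow> nat \<Rightarrow> nat" where
  "nu p f e = Max {a. root_splits p e (f ^ a)}"

locale fsetting =
  fixes p :: nat and f :: "'a::comm_ring_1"
  assumes pr: "prime p" and ch: "CHAR('a) = p" and fp: "F_pure_ring p TYPE('a)"
    and nu1: "\<not> f dvd 1"
begin

lemma nu_iff: "root_splits p e (f ^ a) \<longleftrightarrow> a \<le> nu p f e"
proof -
  let ?S = "{a. root_splits p e (f ^ a)}"
  have "?S \<subseteq> {..<p^e}" using splits_bound[OF _ nu1] by blast
  then have fin: "finite ?S" using finite_subset by blast
  have "root_splits p e (1::'a)" using splits_one[OF fp] .
  then have "0 \<in> ?S" by simp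
  then have "Max ?S \<in> ?S" using Max_in[OF fin] by blast
  then have mem: "nu p f e \<in> ?S" unfolding nu_def .
  show ?thesis
  proof
    assume "root_splits p e (f ^ a)"
    then show "a \<le> nu p f e" unfolding nu_def using Max_ge[OF fin] by blast
  next
    assume "a \<le> nu p f e"
    then show "root_splits p e (f ^ a)" using mem splits_mono by blast
  qed
qed

lemma nu_splits: "root_splits p e (f ^ nu p f e)" using nu_iff by simp

lemma nu_lt: "nu p f e < p ^ e" using splits_bound[OF nu_splits nu1] .

lemma nu0: "nu p f 0 = 0" using nu_lt[of 0] by simp

lemma nu_up: "nu p f e * p ^ j \<le> nu p f (e + j)"
proof -
  have "root_splits p (e + j) ((f ^ nu p f e) ^ (p ^ j) * 1)"
    using splits_comp[OF nu_splits splits_one[OF fp]] .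
  then show ?thesis using nu_iff by (simp flip: power_mult)
qed

lemma nu_dn: "nu p f (e + j) < (nu p f e + 1) * p ^ j"
proof -
  have "nu p f (e + j) div p ^ j \<le> nu p f e"
    using splits_down[OF pr ch nu_splits] nu_iff by blast
  moreover have "p ^ j > 0" using pr prime_gt_0_nat by simp
  ultimately show ?thesis
    by (metis add_le_mono1 div_less_iff_less_mult less_Suc_eq_le plus_1_eq_Suc
        add.commute)
qed

lemma nu_jump:
  assumes "nu p f k \<ge> 1"
  shows "nu p f e * p ^ k + 1 \<le> nu p f (e + k)"
proof -
  have "root_splits p k (f ^ 1)" using assms nu_iff by blast
  then have "root_splits p (e + k) ((f ^ nu p f e) ^ (p ^ k) * f ^ 1)"
    using splits_comp[OF nu_splits] by blast
  moreover have "(f ^ nu p f e) ^ (p ^ k) * f ^ 1 = f ^ (nu p f e * p ^ k + 1)"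
    by (simp add: power_add power_mult)
  ultimately show ?thesis using nu_iff by metis
qed

lemma floor_le_nat: "nat \<lfloor>x\<rfloor> \<le> n \<longleftrightarrow> x < real n + 1"
  by (simp add: nat_le_iff floor_le_iff)

lemma pair_iff: "F_pure_pair p f lam \<longleftrightarrow> (\<forall>e\<ge>1. (real p ^ e - 1) * lam < real (nu p f e) + 1)"
  unfolding F_pure_pair_def nu_iff floor_le_nat by simp

lemma q1: "real p > 1" using pr prime_gt_1_nat by simp

lemma upper:
  assumes "F_pure_pair p f lam"
  shows "lam * real p ^ e \<le> real (nu p f e) + 1"
proof (rule ccontr)
  let ?q = "real p"
  assume na: "\<not> ?thesis"
  define \<delta> where "\<delta> = lam * ?q ^ e - (real (nu p f e) + 1)"
  have d: "\<delta> > 0" using na \<delta>_def by simp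
  obtain n where n: "lam / \<delta> < ?q ^ n" using real_arch_pow[OF q1] by blast
  define j where "j = Suc n"
  have "?q ^ n \<le> ?q ^ j" unfolding j_def using q1 by (intro power_increasing) auto
  then have "lam / \<delta> < ?q ^ j" using n by simp
  then have lj: "lam < \<delta> * ?q ^ j" using d by (simp add: pos_divide_less_eq mult.commute)
  have A: "(?q ^ (e + j) - 1) * lam < real (nu p f (e + j)) + 1"
    using assms pair_iff j_def by auto
  have "nu p f (e + j) + 1 \<le> (nu p f e + 1) * p ^ j" using nu_dn[of e j] by simp
  then have "real (nu p f (e + j) + 1) \<le> real ((nu p f e + 1) * p ^ j)" by (simp only: of_nat_le_iff)
  then have B: "real (nu p f (e + j)) + 1 \<le> (real (nu p f e) + 1) * ?q ^ j" by (simp add: algebra_simps)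
  have C: "(?q ^ (e + j) - 1) * lam = (\<delta> + real (nu p f e) + 1) * ?q ^ j - lam"
    unfolding \<delta>_def by (simp add: power_add algebra_simps)
  from A B C have "\<delta> * ?q ^ j < lam" by (simp add: algebra_simps)
  then show False using lj by simp
qed

lemma lower: "real (nu p f e) / real p ^ e \<in> {lam. lam \<ge> 0 \<and> F_pure_pair p f lam}"
proof -
  let ?q = "real p" and ?v = "real (nu p f e)"
  have "(?q ^ e' - 1) * (?v / ?q ^ e) < real (nu p f e') + 1" if "e' \<ge> 1" for e'
  proof -
    have a: "(?q ^ e' - 1) * (?v / ?q ^ e) \<le> ?q ^ e' * (?v / ?q ^ e)"
      by (intro mult_right_mono) auto
    show ?thesis
    proof (cases "e \<le> e'")
      case True
      then obtain j where j: "e' = e + j" using le_Suc_ex by blast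
      have "nu p f e * p ^ j \<le> nu p f e'" using nu_up j by simp
      then have "real (nu p f e * p ^ j) \<le> real (nu p f e')" by (simp only: of_nat_le_iff)
      then have "?v * ?q ^ j \<le> real (nu p f e')" by simp
      moreover have "?q ^ e' * (?v / ?q ^ e) = ?v * ?q ^ j" using q1 j by (simp add: power_add field_simps)
      ultimately show ?thesis using a by linarith
    next
      case False
      then obtain j where j: "e = e' + j" using le_Suc_ex[of e' e] by auto
      have "nu p f e < (nu p f e' + 1) * p ^ j" using nu_dn j by simp
      then have "real (nu p f e) < real ((nu p f e' + 1) * p ^ j)" by (simp only: of_nat_less_iff)
      then have "?v < (real (nu p f e') + 1) * ?q ^ j" by (simp add: algebra_simps)
      then have "?v / ?q ^ j < real (nu p f e') + 1" using q1 by (simp add: pos_divide_less_eq)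
      moreover have "?q ^ e' * (?v / ?q ^ e) = ?v / ?q ^ j" using q1 j by (simp add: power_add field_simps)
      ultimately show ?thesis using a by linarith
    qed
  qed
  then show ?thesis using pair_iff by simp
qed

lemma bdd: "bdd_above {lam. lam \<ge> 0 \<and> F_pure_pair p f lam}"
proof (rule bdd_aboveI)
  fix x assume "x \<in> {lam. lam \<ge> 0 \<and> F_pure_pair p f lam}"
  then show "x \<le> 1" using upper[of x 0] nu0 by simp
qed

lemma fpt_ge: "real (nu p f e) / real p ^ e \<le> fpt p f"
  unfolding fpt_def by (rule cSup_upper[OF lower bdd])

lemma fpt_le: "fpt p f \<le> (real (nu p f e) + 1) / real p ^ e"
  unfolding fpt_def
proof (rule cSup_least)
  show "{lam. lam \<ge> 0 \<and> F_pure_pair p f lam} \<noteq> {}" using lower by blast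
next
  fix x assume "x \<in> {lam. lam \<ge> 0 \<and> F_pure_pair p f lam}"
  then have "x * real p ^ e \<le> real (nu p f e) + 1" using upper by simp
  then show "x \<le> (real (nu p f e) + 1) / real p ^ e" using q1 by (simp add: pos_le_divide_eq)
qed

lemma main: "real p ^ d * trunc p (fpt p f) d = real (nu p f d)"
proof (cases "\<exists>k. nu p f k \<ge> 1")
  case True
  then obtain k where k: "nu p f k \<ge> 1" by blast
  have lo: "real (nu p f e) / real p ^ e < fpt p f" for e
  proof -
    have "nu p f e * p ^ k + 1 \<le> nu p f (e + k)" using nu_jump[OF k] .
    then have "real (nu p f e * p ^ k + 1) \<le> real (nu p f (e + k))" by (simp only: of_nat_le_iff)
    then have "real (nu p f e) * real p ^ k + 1 \<le> real (nu p f (e + k))" by simp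
    then have "(real (nu p f e) * real p ^ k + 1) / real p ^ (e + k) \<le> real (nu p f (e + k)) / real p ^ (e + k)"
      using q1 by (intro divide_right_mono) auto
    moreover have "real (nu p f e) / real p ^ e < (real (nu p f e) * real p ^ k + 1) / real p ^ (e + k)"
      using q1 by (simp add: power_add field_simps)
    ultimately show ?thesis using fpt_ge[of "e + k"] by linarith
  qed
  have p2: "p \<ge> 2" using pr prime_ge_2_nat by blast
  show ?thesis
  proof (rule trunc_from_nu[where \<nu>="nu p f" and \<alpha>="fpt p f", OF p2 nu0])
    show "nu p f e * p \<le> nu p f (Suc e)" for e using nu_up[of e 1] by simp
    show "nu p f (Suc e) < (nu p f e + 1) * p" for e using nu_dn[of e 1] by simp
  qed (use lo fpt_le in auto)
next
  case False
  have z: "nu p f e = 0" for e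
  proof -
    have "\<not> nu p f e \<ge> 1" using False by blast
    then show ?thesis by simp
  qed
  have "fpt p f \<le> 0"
  proof (rule ccontr)
    assume "\<not> fpt p f \<le> 0"
    then obtain m where "1 / real p ^ m < fpt p f" using arch_small[OF q1] by fastforce
    then show False using fpt_le[of m] z by simp
  qed
  moreover have "0 \<le> fpt p f" using fpt_ge[of 0] z by simp
  ultimately have "fpt p f = 0" by simp
  then show ?thesis using z by (simp add: trunc_def)
qed

end


theorem mainTheorem3:
  fixes p :: nat and f :: "'a::comm_ring_1" and d :: nat
  assumes "prime p"
    and "CHAR('a) = p"
    and "F_pure_ring p TYPE('a)"
    and "f \<noteq> 0" and "\<not> f dvd 1"
    and "d \<ge> 1"
  shows "real p ^ d * trunc p (fpt p f) d = real (Max {a::nat. root_splits p d (f ^ a)})"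
proof -
  interpret fsetting p f using assms by unfold_locales auto
  show ?thesis using main[of d] unfolding nu_def .
qed

end
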